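(* Let $\sigma_1,\sigma_2\subset\mathbb{Q}^n$ be strongly convex rational polyhedral cones with $\dim\sigma_1=n_1$, $\dim\sigma_2=n_2$, having $k_1$ and $k_2$ extreme rays respectively, and suppose there is $\mathbf{a}\in\sigma_1\cap\sigma_2$ with $\mathrm{span}_{\mathbb{Q}}(\sigma_1)\cap\mathrm{span}_{\mathbb{Q}}(\sigma_2)=\mathbb{Q}\mathbf{a}$. Let $\sigma=\sigma_1\oplus\sigma_2=\mathrm{pos}_{\mathbb{Q}}(\sigma_1\cup\sigma_2)$ be their direct sum along $\mathbf{a}$. Then $\dim\sigma=n_1+n_2-1$; moreover $\sigma$ has exactly $k_1+k_2$ extreme rays if the direct sum is of internal type, and exactly $k_1+k_2-1$ extreme rays if it is of external type.
   Context: $\mathrm{span}_{\mathbb{Q}}(B)$ and $\mathrm{pos}_{\mathbb{Q}}(B)$ denote the rational linear hull and the set of nonnegative rational combinations of $B$. A cone $\sigma$ is strongly convex if $\sigma\cap(-\sigma)=\{\mathbf 0\}$; its dimension is $\dim_{\mathbb{Q}}\mathrm{span}_{\mathbb{Q}}(\sigma)$. A face of $\sigma$ is a set $\sigma\cap\{\mathbf{x}:\mathbf{c}\cdot\mathbf{x}=0\}$ where $\mathbf{c}\in\mathbb{Q}^n$ satisfies $\mathbf{c}\cdot\mathbf{x}\ge0$ for all $\mathbf{x}\in\sigma$; extreme rays are the faces of dimension one, written $\mathbb{Q}_{\ge0}\mathbf{r}$. The direct sum $\sigma_1\oplus\sigma_2$ along $\mathbf{a}$ is called of external type if $\mathbf{a}$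 lies on an extreme ray of $\sigma_1$ or of $\sigma_2$ (or both), and of internal type otherwise. *)

theory Defs
  imports "HOL-Analysis.Analysis"
begin

text \<open>Vectors in Q^n are modelled as rat ^ 'n; rational linear hull and dimension
  are the library notions vec.span and vec.dim (vector space rat ^ 'n over rat).\<close>

definition posQ :: "(rat ^ 'n) set \<Rightarrow> (rat ^ 'n) set" where
  "posQ B = {x. \<exists>S c. finite S \<and> S \<subseteq> B \<and> (\<forall>v\<in>S. c v \<ge> 0) \<and>
                      x = (\<Sum>v\<in>S. c v *s v)}"

definition rat_polyhedral_cone :: "(rat ^ 'n) set \<Rightarrow> bool" where
  "rat_polyhedral_cone \<sigma> \<longleftrightarrow> (\<exists>F. finite F \<and> \<sigma> = posQ F)"

definition strongly_convex :: "(rat ^ 'n) set \<Rightarrow> bool" where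
  "strongly_convex \<sigma> \<longleftrightarrow> \<sigma> \<inter> uminus ` \<sigma> = {0}"

definition dotQ :: "rat ^ 'n \<Rightarrow> rat ^ 'n \<Rightarrow> rat" where
  "dotQ c x = (\<Sum>i\<in>UNIV. c $ i * x $ i)"

definition is_face :: "(rat ^ 'n) set \<Rightarrow> (rat ^ 'n) set \<Rightarrow> bool" where
  "is_face \<sigma> F \<longleftrightarrow> (\<exists>c. (\<forall>x\<in>\<sigma>. dotQ c x \<ge> 0) \<and> F = \<sigma> \<inter> {x. dotQ c x = 0})"

definition extreme_rays :: "(rat ^ 'n) set \<Rightarrow> (rat ^ 'n) set set" where
  "extreme_rays \<sigma> = {F. is_face \<sigma> F \<and> vec.dim F = 1}"

definition on_extreme_ray :: "rat ^ 'n \<Rightarrow> (rat ^ 'n) set \<Rightarrow> bool" where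
  "on_extreme_ray a \<sigma> \<longleftrightarrow> (\<exists>F\<in>extreme_rays \<sigma>. a \<in> F)"

end

theory Submission
  imports Defs
begin


lemma dotQ_add_right: "dotQ c (x + y) = dotQ c x + dotQ c y"
  by (simp add: dotQ_def distrib_left sum.distrib)
lemma dotQ_scale_right: "dotQ c (t *s x) = t * dotQ c x"
  by (simp add: dotQ_def sum_distrib_left mult.left_commute)
lemma dotQ_add_left: "dotQ (c + d) x = dotQ c x + dotQ d x"
  by (simp add: dotQ_def distrib_right sum.distrib)
lemma dotQ_scale_left: "dotQ (t *s c) x = t * dotQ c x"
  by (simp add: dotQ_def sum_distrib_left mult.assoc)
lemma dotQ_diff_left: "dotQ (c - d) x = dotQ c x - dotQ d x"
  by (simp add: dotQ_def left_diff_distrib sum_subtractf)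
lemma dotQ_diff_right: "dotQ c (x - y) = dotQ c x - dotQ c y"
  by (simp add: dotQ_def right_diff_distrib sum_subtractf)
lemma dotQ_zero_right[simp]: "dotQ c 0 = 0"
  by (simp add: dotQ_def)
lemma dotQ_zero_left[simp]: "dotQ 0 x = 0"
  by (simp add: dotQ_def)
lemma dotQ_comm: "dotQ c x = dotQ x c"
  by (simp add: dotQ_def mult.commute)
lemma dotQ_sum_right: "dotQ c (\<Sum>v\<in>S. f v) = (\<Sum>v\<in>S. dotQ c (f v))"
  by (induction S rule: infinite_finite_induct) (auto simp: dotQ_add_right)
lemma dotQ_self_pos: assumes "u \<noteq> 0" shows "dotQ u u > 0"
proof -
  obtain i where i: "u $ i \<noteq> 0" using assms by (metis vec_eq_iff zero_index)
  have "dotQ u u \<ge> u $ i * u $ i" unfolding dotQ_def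
    by (rule member_le_sum) auto
  moreover have "u $ i * u $ i > 0" by (metis i linorder_neq_iff mult_neg_neg mult_pos_pos)
  ultimately show ?thesis by linarith
qed

lemma vsp: "vector_space_pair ((*s) :: rat \<Rightarrow> rat^'n \<Rightarrow> rat^'n) ((*) :: rat \<Rightarrow> rat \<Rightarrow> rat)"
  unfolding vector_space_pair_def
  using vec.vector_space_axioms vector_space_over_itself.vector_space_axioms by auto

lemma dotQ_extend:
  assumes "vec.independent (B :: (rat^'n) set)"
  shows "\<exists>c. \<forall>b\<in>B. dotQ c b = f b"
proof -
  obtain g where g: "Vector_Spaces.linear ((*s) :: rat \<Rightarrow> rat^'n \<Rightarrow> rat^'n) ((*) :: rat \<Rightarrow> rat \<Rightarrow> rat) g"
     "\<forall>x\<in>B. g x = f x"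
    using vector_space_pair.linear_independent_extend[OF vsp assms] by blast
  define c :: "rat^'n" where "c = (\<chi> i. g (axis i 1))"
  have "dotQ c x = g x" for x
  proof -
    have "g x = g (\<Sum>i\<in>UNIV. x$i *s axis i 1)" by (simp add: basis_expansion)
    also have "\<dots> = (\<Sum>i\<in>UNIV. x$i * g (axis i 1))"
      using g(1) unfolding linear_iff_module_hom
      by (simp add: module_hom.sum module_hom.scale)
    finally show ?thesis by (simp add: c_def dotQ_def mult.commute)
  qed
  then show ?thesis using g(2) by (intro exI[of _ c]) auto
qed

lemma dotQ_span:
  assumes "\<forall>b\<in>B. dotQ c b = dotQ d b" "x \<in> vec.span B"
  shows "dotQ c x = dotQ d x"
  using assms(2)
proof (induction rule: vec.span_induct)
  case base
  show ?case unfolding vec.subspace_def by (auto simp: dotQ_add_right dotQ_scale_right)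
next
  case (step x) then show ?case using assms(1) by auto
qed

definition nodep :: "'i set \<Rightarrow> ('i \<Rightarrow> rat^'n) \<Rightarrow> bool" where
  "nodep I f \<longleftrightarrow> (\<forall>l. (\<forall>i\<in>I. l i \<ge> 0) \<longrightarrow> (\<Sum>i\<in>I. l i *s f i) = 0 \<longrightarrow> (\<forall>i\<in>I. l i = 0))"

lemma gordan:
  fixes f :: "'i \<Rightarrow> rat^'n"
  assumes "finite I" "nodep I f"
  shows "\<exists>c. \<forall>i\<in>I. dotQ c (f i) > 0"
  using assms
proof (induction I arbitrary: f rule: finite_induct)
  case empty
  then show ?case by auto
next
  case (insert k W)
  define u where "u = f k"
  have ndW: "nodep W f"
    unfolding nodep_def
  proof (intro allI impI)
    fix l :: "'i \<Rightarrow> rat" assume l: "\<forall>i\<in>W. 0 \<le> l i" "(\<Sum>i\<in>W. l i *s f i) = 0"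
    define l' where "l' = l(k := 0)"
    have "(\<Sum>i\<in>insert k W. l' i *s f i) = (\<Sum>i\<in>W. l' i *s f i)"
      using insert(1,2) by (simp add: l'_def)
    also have "\<dots> = (\<Sum>i\<in>W. l i *s f i)"
      using insert(2) by (intro sum.cong) (auto simp: l'_def)
    finally have s0: "(\<Sum>i\<in>insert k W. l' i *s f i) = 0" using l(2) by simp
    have nn: "\<forall>i\<in>insert k W. 0 \<le> l' i" using l(1) by (auto simp: l'_def)
    have "\<forall>i\<in>insert k W. l' i = 0"
      using insert(4) nn s0 unfolding nodep_def by blast
    then show "\<forall>i\<in>W. l i = 0" using insert(2) by (auto simp: l'_def split: if_splits)
  qed
  obtain cW where cW: "\<forall>i\<in>W. dotQ cW (f i) > 0" using insert(3)[OF ndW] by blast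
  have u0: "u \<noteq> 0"
  proof
    assume "u = 0"
    define l :: "'i \<Rightarrow> rat" where "l = (\<lambda>i. if i = k then 1 else 0)"
    have "(\<Sum>i\<in>insert k W. l i *s f i) = 0"
      using insert(1,2) \<open>u = 0\<close> by (auto simp: l_def u_def intro!: sum.neutral)
    moreover have "\<forall>i\<in>insert k W. 0 \<le> l i" by (simp add: l_def)
    ultimately have "l k = 0" using insert(4) unfolding nodep_def by blast
    then show False by (simp add: l_def)
  qed
  have uu: "dotQ u u > 0" using dotQ_self_pos[OF u0] .
  define P where "P x = dotQ u u *s x - dotQ x u *s u" for x
  show ?case
  proof (cases "nodep W (\<lambda>i. P (f i))")
    case True
    obtain c' where c': "\<forall>i\<in>W. dotQ c' (P (f i)) > 0" using insert(3)[OF True] by blast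
    define d where "d = P c'"
    have dsym: "dotQ d w = dotQ c' (P w)" for w
    proof -
      have "dotQ d w = dotQ u u * dotQ c' w - dotQ c' u * dotQ u w"
        by (simp add: d_def P_def dotQ_diff_left dotQ_scale_left)
      moreover have "dotQ c' (P w) = dotQ u u * dotQ c' w - dotQ w u * dotQ c' u"
        by (simp add: P_def dotQ_diff_right dotQ_scale_right)
      moreover have "dotQ w u = dotQ u w" by (rule dotQ_comm)
      ultimately show ?thesis by (simp add: mult.commute)
    qed
    have du: "dotQ d u = 0"
      by (simp add: d_def P_def dotQ_diff_left dotQ_scale_left)
    have dpos: "\<forall>i\<in>W. dotQ d (f i) > 0" using c' dsym by auto
    define K where "K = 1 + (\<Sum>i\<in>W. \<bar>dotQ u (f i)\<bar> / dotQ d (f i))"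
    define c where "c = K *s d + u"
    have "dotQ c (f i) > 0" if i: "i \<in> W" for i
    proof -
      have "\<bar>dotQ u (f i)\<bar> / dotQ d (f i) \<le> (\<Sum>i\<in>W. \<bar>dotQ u (f i)\<bar> / dotQ d (f i))"
        using insert(1) i dpos by (intro member_le_sum) auto
      then have "K \<ge> \<bar>dotQ u (f i)\<bar> / dotQ d (f i) + 1" unfolding K_def by linarith
      then have "K * dotQ d (f i) \<ge> (\<bar>dotQ u (f i)\<bar> / dotQ d (f i) + 1) * dotQ d (f i)"
        using dpos i by (intro mult_right_mono) auto
      also have "(\<bar>dotQ u (f i)\<bar> / dotQ d (f i) + 1) * dotQ d (f i) = \<bar>dotQ u (f i)\<bar> + dotQ d (f i)"
      proof -
        have "dotQ d (f i) \<noteq> 0" using dpos i by force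
        then show ?thesis by (simp add: distrib_right)
      qed
      finally have "K * dotQ d (f i) \<ge> \<bar>dotQ u (f i)\<bar> + dotQ d (f i)" .
      moreover have "dotQ d (f i) > 0" using dpos i by blast
      ultimately have "K * dotQ d (f i) > - dotQ u (f i)"
        using abs_ge_minus_self[of "dotQ u (f i)"] by linarith
      then show ?thesis by (simp add: c_def dotQ_add_left dotQ_scale_left)
    qed
    moreover have "dotQ c (f k) > 0"
      using uu du by (simp add: c_def dotQ_add_left dotQ_scale_left u_def[symmetric])
    ultimately show ?thesis by auto
  next
    case False
    then obtain l j where l: "\<forall>i\<in>W. l i \<ge> 0" "(\<Sum>i\<in>W. l i *s P (f i)) = 0" and j: "j \<in> W" "l j \<noteq> 0"
      unfolding nodep_def by blast
    define s where "s = (\<Sum>i\<in>W. l i *s f i)"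
    define t where "t = (\<Sum>i\<in>W. l i * dotQ (f i) u)"
    have "(\<Sum>i\<in>W. l i *s P (f i)) = (\<Sum>i\<in>W. (dotQ u u * l i) *s f i - (l i * dotQ (f i) u) *s u)"
      by (intro sum.cong) (auto simp: P_def vec.scale_right_diff_distrib vec.scale_scale mult.commute)
    also have "\<dots> = dotQ u u *s s - t *s u"
      by (simp add: sum_subtractf s_def t_def vec.scale_sum_right vec.scale_sum_left vec.scale_scale)
    finally have eq: "dotQ u u *s s = t *s u" using l(2) by simp
    have ljpos: "l j > 0" using l(1) j by force
    show ?thesis
    proof (cases "t \<le> 0")
      case True
      define m where "m = l(k := - t / dotQ u u)"
      have "(\<Sum>i\<in>insert k W. m i *s f i) = m k *s f k + (\<Sum>i\<in>W. m i *s f i)"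
        using insert(1,2) by simp
      also have "(\<Sum>i\<in>W. m i *s f i) = s"
        unfolding s_def using insert(2) by (intro sum.cong) (auto simp: m_def)
      also have "m k *s f k = (- t / dotQ u u) *s u" by (simp add: m_def u_def)
      also have "s = (1 / dotQ u u) *s (dotQ u u *s s)" using uu by (simp add: vec.scale_scale)
      also have "\<dots> = (t / dotQ u u) *s u" unfolding eq by (simp add: vec.scale_scale)
      finally have s0: "(\<Sum>i\<in>insert k W. m i *s f i) = 0"
        by (simp add: vec.scale_left_distrib[symmetric])
      have nn: "\<forall>i\<in>insert k W. 0 \<le> m i" using l(1) True uu by (auto simp: m_def divide_nonpos_pos)
      have "m j = 0" using insert(4) nn s0 j(1) unfolding nodep_def by blast
      moreover have "m j = l j" using j(1) insert(2) by (auto simp: m_def)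
      ultimately show ?thesis using j(2) by simp
    next
      case False
      have "(dotQ u u / t) *s s = (1 / t) *s (dotQ u u *s s)" by (simp add: vec.scale_scale)
      also have "\<dots> = u" using False unfolding eq by (simp add: vec.scale_scale)
      finally have "u = (dotQ u u / t) *s s" by simp
      then have "dotQ cW u = dotQ cW ((dotQ u u / t) *s s)" by (rule arg_cong)
      also have "\<dots> = (dotQ u u / t) * (\<Sum>i\<in>W. l i * dotQ cW (f i))"
        by (simp only: s_def dotQ_scale_right dotQ_sum_right)
      finally have "dotQ cW u = (dotQ u u / t) * (\<Sum>i\<in>W. l i * dotQ cW (f i))" .
      moreover have "(\<Sum>i\<in>W. l i * dotQ cW (f i)) > 0"
        using insert(1) j(1) ljpos cW l(1) by (intro sum_pos2[where i=j]) auto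
      moreover have "dotQ u u / t > 0" using False uu by simp
      ultimately have "dotQ cW u > 0" by (metis mult_pos_pos)
      then show ?thesis using cW u_def by auto
    qed
  qed
qed



definition cc :: "(rat^'n) set \<Rightarrow> bool" where
  "cc X \<longleftrightarrow> 0 \<in> X \<and> (\<forall>x\<in>X. \<forall>y\<in>X. x + y \<in> X) \<and> (\<forall>x\<in>X. \<forall>t::rat. t \<ge> 0 \<longrightarrow> t *s x \<in> X)"

lemma cc_zero: "cc X \<Longrightarrow> 0 \<in> X" unfolding cc_def by blast
lemma cc_add: "cc X \<Longrightarrow> x \<in> X \<Longrightarrow> y \<in> X \<Longrightarrow> x + y \<in> X" unfolding cc_def by blast
lemma cc_scale: "cc X \<Longrightarrow> x \<in> X \<Longrightarrow> t \<ge> 0 \<Longrightarrow> t *s x \<in> X" unfolding cc_def by blast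

lemma cc_sum: assumes "cc X" "finite S" "\<forall>v\<in>S. f v \<in> X" shows "sum f S \<in> X"
  using assms(2,3)
proof (induction S rule: finite_induct)
  case empty then show ?case using assms(1) by (simp add: cc_def)
next
  case (insert x F) then show ?case using assms(1) by (simp add: cc_def)
qed

lemma posQ_least: assumes "cc X" "B \<subseteq> X" shows "posQ B \<subseteq> X"
proof
  fix x assume "x \<in> posQ B"
  then obtain S c where S: "finite S" "S \<subseteq> B" "\<forall>v\<in>S. c v \<ge> 0" "x = (\<Sum>v\<in>S. c v *s v)"
    unfolding posQ_def by blast
  have "\<forall>v\<in>S. c v *s v \<in> X" using S(2,3) assms cc_scale by blast
  then show "x \<in> X" using cc_sum[OF assms(1) S(1)] S(4) by simp
qed

lemma subset_posQ: "B \<subseteq> posQ B"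
proof
  fix b assume "b \<in> B"
  then show "b \<in> posQ B" unfolding posQ_def
    by (intro CollectI exI[of _ "{b}"] exI[of _ "\<lambda>_. 1"]) auto
qed

lemma cc_posQ: "cc (posQ B)"
proof -
  have z: "0 \<in> posQ B" unfolding posQ_def by (intro CollectI exI[of _ "{}"]) auto
  have a: "x + y \<in> posQ B" if x: "x \<in> posQ B" and y: "y \<in> posQ B" for x y
  proof -
    obtain S c where S: "finite S" "S \<subseteq> B" "\<forall>v\<in>S. c v \<ge> 0" "x = (\<Sum>v\<in>S. c v *s v)"
      using x unfolding posQ_def by blast
    obtain T d where T: "finite T" "T \<subseteq> B" "\<forall>v\<in>T. d v \<ge> 0" "y = (\<Sum>v\<in>T. d v *s v)"
      using y unfolding posQ_def by blast
    define e where "e v = (if v \<in> S then c v else 0) + (if v \<in> T then d v else 0)" for v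
    have "(\<Sum>v\<in>S \<union> T. e v *s v) = (\<Sum>v\<in>S \<union> T. (if v \<in> S then c v *s v else 0)) + (\<Sum>v\<in>S \<union> T. (if v \<in> T then d v *s v else 0))"
      by (simp add: e_def vec.scale_left_distrib sum.distrib if_distrib[of "\<lambda>t. t *s _"] cong: if_cong)
    also have "\<dots> = x + y"
    proof -
      have e1: "(S \<union> T) \<inter> S = S" "(S \<union> T) \<inter> T = T" by blast+
      have "(\<Sum>v\<in>S \<union> T. (if v \<in> S then c v *s v else 0)) = (\<Sum>v\<in>S. c v *s v)"
        using S(1) T(1) sum.inter_restrict[of "S \<union> T" "\<lambda>v. c v *s v" S] e1 by simp
      moreover have "(\<Sum>v\<in>S \<union> T. (if v \<in> T then d v *s v else 0)) = (\<Sum>v\<in>T. d v *s v)"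
        using S(1) T(1) sum.inter_restrict[of "S \<union> T" "\<lambda>v. d v *s v" T] e1 by simp
      ultimately show ?thesis using S(4) T(4) by simp
    qed
    finally have "x + y = (\<Sum>v\<in>S \<union> T. e v *s v)" by simp
    moreover have "\<forall>v\<in>S \<union> T. e v \<ge> 0" using S(3) T(3) by (auto simp: e_def)
    ultimately show ?thesis using S(1,2) T(1,2) unfolding posQ_def
      by (intro CollectI exI[of _ "S \<union> T"] exI[of _ e]) auto
  qed
  have m: "t *s x \<in> posQ B" if x: "x \<in> posQ B" and t: "t \<ge> 0" for x t
  proof -
    obtain S c where S: "finite S" "S \<subseteq> B" "\<forall>v\<in>S. c v \<ge> 0" "x = (\<Sum>v\<in>S. c v *s v)"
      using x unfolding posQ_def by blast
    have "t *s x = (\<Sum>v\<in>S. (t * c v) *s v)" by (simp add: S(4) vec.scale_sum_right vec.scale_scale)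
    moreover have "\<forall>v\<in>S. t * c v \<ge> 0" using S(3) t by auto
    ultimately show ?thesis using S(1,2) unfolding posQ_def
      by (intro CollectI exI[of _ S] exI[of _ "\<lambda>v. t * c v"]) auto
  qed
  show ?thesis unfolding cc_def using z a m by blast
qed


lemma posQ_Un:
  assumes "cc A" "cc B"
  shows "posQ (A \<union> B) = {y1 + y2 | y1 y2. y1 \<in> A \<and> y2 \<in> B}"
proof
  let ?X = "{y1 + y2 | y1 y2. y1 \<in> A \<and> y2 \<in> B}"
  have "cc ?X" unfolding cc_def
  proof (intro conjI ballI allI impI)
    have "(0::rat^'n) = 0 + 0" by simp
    then show "0 \<in> ?X" using cc_zero[OF assms(1)] cc_zero[OF assms(2)] by blast
  next
    fix x y assume "x \<in> ?X" "y \<in> ?X"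
    then obtain x1 x2 y1 y2 where "x = x1 + x2" "y = y1 + y2" "x1 \<in> A" "x2 \<in> B" "y1 \<in> A" "y2 \<in> B" by blast
    moreover have "x + y = (x1 + y1) + (x2 + y2)" using calculation by (simp add: algebra_simps)
    ultimately show "x + y \<in> ?X" using assms cc_add by blast
  next
    fix x and t :: rat assume "x \<in> ?X" "t \<ge> 0"
    then obtain x1 x2 where "x = x1 + x2" "x1 \<in> A" "x2 \<in> B" by blast
    moreover have "t *s x = t *s x1 + t *s x2" using calculation by (simp add: vec.scale_right_distrib)
    ultimately show "t *s x \<in> ?X" using assms \<open>t \<ge> 0\<close> cc_scale by blast
  qed
  moreover have "A \<union> B \<subseteq> ?X"
  proof
    fix x assume "x \<in> A \<union> B"
    then show "x \<in> ?X"
    proof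
      assume "x \<in> A" then show ?thesis using cc_zero[OF assms(2)] by (intro CollectI exI[of _ x] exI[of _ 0]) auto
    next
      assume "x \<in> B" then show ?thesis using cc_zero[OF assms(1)] by (intro CollectI exI[of _ 0] exI[of _ x]) auto
    qed
  qed
  ultimately show "posQ (A \<union> B) \<subseteq> ?X" by (rule posQ_least)
next
  show "{y1 + y2 | y1 y2. y1 \<in> A \<and> y2 \<in> B} \<subseteq> posQ (A \<union> B)"
  proof
    fix x assume "x \<in> {y1 + y2 | y1 y2. y1 \<in> A \<and> y2 \<in> B}"
    then obtain y1 y2 where "x = y1 + y2" "y1 \<in> A" "y2 \<in> B" by blast
    then show "x \<in> posQ (A \<union> B)"
      using cc_add[OF cc_posQ[of "A \<union> B"]] subset_posQ[of "A \<union> B"] by blast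
  qed
qed

lemma sc_zero:
  assumes "strongly_convex X" "x \<in> X" "- x \<in> X" shows "x = 0"
proof -
  have "x \<in> uminus ` X" using assms(3) by (metis image_eqI minus_minus)
  then show ?thesis using assms(1,2) unfolding strongly_convex_def by blast
qed

lemma sc_pair:
  assumes "strongly_convex X" "y \<in> X" "z \<in> X" "y + z = 0" shows "y = 0"
proof -
  have "- y = z" using assms(4) by (simp add: add_eq_0_iff)
  then show ?thesis using sc_zero[OF assms(1,2)] assms(3) by simp
qed


definition rayQ :: "rat^'n \<Rightarrow> (rat^'n) set" where
  "rayQ r = {t *s r | t. t \<ge> 0}"

lemma rayQ_self: "r \<in> rayQ r"
  unfolding rayQ_def by (intro CollectI exI[of _ 1]) auto

lemma rayQ_subset: "cc X \<Longrightarrow> r \<in> X \<Longrightarrow> rayQ r \<subseteq> X"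
  unfolding rayQ_def using cc_scale by blast

lemma dim_rayQ: assumes "r \<noteq> 0" shows "vec.dim (rayQ r) = 1"
proof -
  have "rayQ r \<subseteq> vec.span {r}" unfolding rayQ_def
    by (auto intro: vec.span_scale vec.span_base)
  moreover have "{r} \<subseteq> vec.span (rayQ r)" using rayQ_self by (auto intro: vec.span_base)
  ultimately have "vec.span (rayQ r) = vec.span {r}" by (simp add: vec.span_eq)
  then have "vec.dim (rayQ r) = vec.dim {r}" by (metis vec.dim_span)
  then show ?thesis using assms by simp
qed

lemma ext_ray_I:
  assumes "r \<noteq> 0" "\<forall>y\<in>X. dotQ c y \<ge> 0" "X \<inter> {y. dotQ c y = 0} = rayQ r"
  shows "rayQ r \<in> extreme_rays X"
  unfolding extreme_rays_def is_face_def using assms dim_rayQ[OF assms(1)] by auto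

lemma ext_ray_face:
  assumes "F \<in> extreme_rays X"
  obtains c where "\<forall>y\<in>X. dotQ c y \<ge> 0" "F = X \<inter> {y. dotQ c y = 0}"
  using assms unfolding extreme_rays_def is_face_def by blast

lemma ext_ray_nonzero:
  assumes "F \<in> extreme_rays X" obtains x where "x \<in> F" "x \<noteq> 0"
proof -
  have "vec.dim F = 1" using assms unfolding extreme_rays_def by blast
  then have "\<not> F \<subseteq> {0}" using vec.dim_eq_0[of F] by auto
  then show ?thesis using that by blast
qed

lemma ext_ray_D:
  assumes "cc X" "strongly_convex X" "F \<in> extreme_rays X" "x \<in> F" "x \<noteq> 0"
  shows "F = rayQ x"
proof -
  obtain c where c: "\<forall>y\<in>X. dotQ c y \<ge> 0" "F = X \<inter> {y. dotQ c y = 0}"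
    using ext_ray_face[OF assms(3)] by blast
  have d1: "vec.dim F = 1" using assms(3) unfolding extreme_rays_def by blast
  have "F \<subseteq> vec.span {x}"
    using vec.card_ge_dim_independent[of "{x}" F] assms(4,5) d1 by auto
  then have sub: "F \<subseteq> range (\<lambda>k. k *s x)" by (simp add: vec.span_singleton)
  have xX: "x \<in> X" using assms(4) c(2) by blast
  show ?thesis
  proof
    show "F \<subseteq> rayQ x"
    proof
      fix y assume y: "y \<in> F"
      then obtain k where k: "y = k *s x" using sub by blast
      have "k \<ge> 0"
      proof (rule ccontr)
        assume "\<not> k \<ge> 0"
        then have kn: "k < 0" by simp
        have k1: "- 1 / k \<ge> 0" using kn by (intro divide_nonpos_neg) auto
        have yX: "y \<in> X" using y c(2) by blast
        have "(- 1 / k) *s y \<in> X" by (rule cc_scale[OF assms(1) yX k1])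
        moreover have "(- 1 / k) *s y = - x" using kn by (simp add: k vec.scale_scale)
        ultimately have "x = 0" using sc_zero[OF assms(2) xX] by simp
        then show False using assms(5) by simp
      qed
      then show "y \<in> rayQ x" unfolding rayQ_def using k by blast
    qed
  next
    show "rayQ x \<subseteq> F"
    proof
      fix y assume "y \<in> rayQ x"
      then obtain t where t: "t \<ge> 0" "y = t *s x" unfolding rayQ_def by blast
      have "y \<in> X" using t xX assms(1) by (simp add: cc_scale)
      moreover have "dotQ c y = 0" using t assms(4) c(2) by (simp add: dotQ_scale_right)
      ultimately show "y \<in> F" using c(2) by blast
    qed
  qed
qed



lemma posQ_obtain:
  assumes "x \<in> posQ F"
  obtains S d where "finite S" "S \<subseteq> F" "\<forall>v\<in>S. d v \<ge> 0" "x = (\<Sum>v\<in>S. d v *s v)"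
  using assms unfolding posQ_def by blast

lemma nonzero_term:
  fixes d :: "rat^'n \<Rightarrow> rat"
  assumes "x = (\<Sum>v\<in>S. d v *s v)" "x \<noteq> 0"
  obtains v where "v \<in> S" "d v \<noteq> 0" "v \<noteq> 0"
proof -
  have "\<exists>v\<in>S. d v *s v \<noteq> 0"
  proof (rule ccontr)
    assume "\<not> (\<exists>v\<in>S. d v *s v \<noteq> 0)"
    then have "x = 0" using assms(1) by (simp add: sum.neutral)
    then show False using assms(2) by simp
  qed
  then obtain v where v: "v \<in> S" "d v *s v \<noteq> 0" by blast
  have "d v \<noteq> 0" using v(2) by auto
  moreover have "v \<noteq> 0" using v(2) by auto
  ultimately show ?thesis using that v(1) by blast
qed

lemma ext_rays_finite:
  assumes "finite F" "strongly_convex (posQ F)"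
  shows "finite (extreme_rays (posQ F))"
proof -
  have ccs: "cc (posQ F)" by (rule cc_posQ)
  have "extreme_rays (posQ F) \<subseteq> rayQ ` F"
  proof
    fix \<rho> assume \<rho>: "\<rho> \<in> extreme_rays (posQ F)"
    obtain x where x: "x \<in> \<rho>" "x \<noteq> 0" using ext_ray_nonzero[OF \<rho>] by blast
    obtain c where c: "\<forall>y\<in>posQ F. dotQ c y \<ge> 0" "\<rho> = posQ F \<inter> {y. dotQ c y = 0}"
      using ext_ray_face[OF \<rho>] by blast
    have xs: "x \<in> posQ F" using x c(2) by blast
    obtain S d where S: "finite S" "S \<subseteq> F" "\<forall>v\<in>S. d v \<ge> 0" "x = (\<Sum>v\<in>S. d v *s v)"
      using posQ_obtain[OF xs] by blast
    have "dotQ c x = (\<Sum>v\<in>S. d v * dotQ c v)" by (simp add: S(4) dotQ_sum_right dotQ_scale_right)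
    moreover have "dotQ c x = 0" using x c(2) by blast
    moreover have nn: "\<forall>v\<in>S. d v * dotQ c v \<ge> 0"
      using S(2,3) c(1) subset_posQ[of F] by (auto intro!: mult_nonneg_nonneg)
    ultimately have s0: "(\<Sum>v\<in>S. d v * dotQ c v) = 0" by simp
    have h: "\<And>v. v \<in> S \<Longrightarrow> 0 \<le> d v * dotQ c v" using nn by blast
    have z: "\<forall>v\<in>S. d v * dotQ c v = 0" using sum_nonneg_eq_0_iff[OF S(1) h] s0 by simp
    obtain v where v: "v \<in> S" "d v \<noteq> 0" "v \<noteq> 0" using nonzero_term[OF S(4) x(2)] by blast
    have "dotQ c v = 0" using z v by auto
    moreover have "v \<in> posQ F" using v S(2) subset_posQ[of F] by blast
    ultimately have "v \<in> \<rho>" using c(2) by blast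
    then have "\<rho> = rayQ v" using ext_ray_D[OF ccs assms(2) \<rho>] v(3) by blast
    then show "\<rho> \<in> rayQ ` F" using v S(2) by blast
  qed
  then show ?thesis using assms(1) finite_subset by blast
qed

lemma pos_functional:
  assumes "finite F" "strongly_convex (posQ F)"
  shows "\<exists>g. \<forall>x\<in>posQ F. x \<noteq> 0 \<longrightarrow> dotQ g x > 0"
proof -
  have ccs: "cc (posQ F)" by (rule cc_posQ)
  have Fs: "F \<subseteq> posQ F" by (rule subset_posQ)
  have nd: "nodep (F - {0}) (\<lambda>v. v)"
    unfolding nodep_def
  proof (intro allI impI ballI)
    fix l :: "rat^'a \<Rightarrow> rat" and w
    assume l: "\<forall>i\<in>F - {0}. 0 \<le> l i" "(\<Sum>i\<in>F - {0}. l i *s i) = 0" and w: "w \<in> F - {0}"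
    show "l w = 0"
    proof (rule ccontr)
      assume lw: "l w \<noteq> 0"
      define y where "y = (\<Sum>i\<in>F - {0} - {w}. l i *s i)"
      have ts: "\<forall>i\<in>F - {0} - {w}. l i *s i \<in> posQ F" using l(1) Fs cc_scale[OF ccs] by blast
      have yS: "y \<in> posQ F" unfolding y_def using cc_sum[OF ccs _ ts] assms(1) by simp
      have "(\<Sum>i\<in>F - {0}. l i *s i) = l w *s w + y"
        unfolding y_def using assms(1) w by (simp add: sum.remove)
      then have s0: "l w *s w + y = 0" using l(2) by simp
      have "l w *s w \<in> posQ F" using l(1) w Fs cc_scale[OF ccs] by blast
      then have "l w *s w = 0" using sc_pair[OF assms(2) _ yS s0] by blast
      then show False using lw w by simp
    qed
  qed
  obtain g where g: "\<forall>v\<in>F - {0}. dotQ g v > 0" using gordan[OF _ nd] assms(1) by blast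
  have "dotQ g x > 0" if x: "x \<in> posQ F" "x \<noteq> 0" for x
  proof -
    obtain S d where S: "finite S" "S \<subseteq> F" "\<forall>v\<in>S. d v \<ge> 0" "x = (\<Sum>v\<in>S. d v *s v)"
      using posQ_obtain[OF x(1)] by blast
    have e: "dotQ g x = (\<Sum>v\<in>S. d v * dotQ g v)" by (simp add: S(4) dotQ_sum_right dotQ_scale_right)
    have nn: "\<forall>v\<in>S. d v * dotQ g v \<ge> 0"
    proof
      fix v assume v: "v \<in> S"
      show "d v * dotQ g v \<ge> 0"
      proof (cases "v = 0")
        case True then show ?thesis by simp
      next
        case False
        then have "dotQ g v > 0" using g v S(2) by blast
        moreover have "d v \<ge> 0" using v S(3) by blast
        ultimately show ?thesis by simp
      qed
    qed
    obtain v where v: "v \<in> S" "d v \<noteq> 0" "v \<noteq> 0" using nonzero_term[OF S(4) x(2)] by blast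
    have "d v > 0" using v S(3) by force
    moreover have "dotQ g v > 0" using g v S(2) by blast
    ultimately have "d v * dotQ g v > 0" by simp
    then have "(\<Sum>v\<in>S. d v * dotQ g v) > 0" using S(1) v(1) nn by (intro sum_pos2[where i=v]) auto
    then show ?thesis using e by simp
  qed
  then show ?thesis by blast
qed

lemma dimsum:
  assumes "vec.span A1 \<inter> vec.span A2 = vec.span {a}" "a \<noteq> 0"
  shows "vec.dim (A1 \<union> A2) + 1 = vec.dim A1 + vec.dim A2"
proof -
  have "vec.dim (A1 \<union> A2) = vec.dim (vec.span (A1 \<union> A2))" by simp
  also have "vec.span (A1 \<union> A2) = {x + y |x y. x \<in> vec.span A1 \<and> y \<in> vec.span A2}"
    by (rule vec.span_Un)
  finally have e: "vec.dim (A1 \<union> A2) = vec.dim {x + y |x y. x \<in> vec.span A1 \<and> y \<in> vec.span A2}" .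
  have "vec.dim {x + y |x y. x \<in> vec.span A1 \<and> y \<in> vec.span A2} + vec.dim (vec.span A1 \<inter> vec.span A2)
      = vec.dim (vec.span A1) + vec.dim (vec.span A2)"
    by (rule vec.dim_sums_Int) auto
  then show ?thesis using e assms by simp
qed



lemma glue:
  fixes A1 A2 :: "(rat^'n) set"
  assumes "vec.span A1 \<inter> vec.span A2 = vec.span {a}" "a \<noteq> 0" "dotQ c1 a = dotQ c2 a"
  shows "\<exists>c. (\<forall>x\<in>vec.span A1. dotQ c x = dotQ c1 x) \<and> (\<forall>x\<in>vec.span A2. dotQ c x = dotQ c2 x)"
proof -
  have aS: "a \<in> vec.span {a}" by (rule vec.span_base) simp
  have a1: "a \<in> vec.span A1" "a \<in> vec.span A2" using assms(1) aS by blast+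
  have ia: "vec.independent {a}" using assms(2) by simp
  obtain B1 where B1: "{a} \<subseteq> B1" "B1 \<subseteq> vec.span A1" "vec.independent B1" "vec.span A1 \<subseteq> vec.span B1"
    using vec.maximal_independent_subset_extend[of "{a}" "vec.span A1"] a1(1) ia by auto
  obtain B2 where B2: "{a} \<subseteq> B2" "B2 \<subseteq> vec.span A2" "vec.independent B2" "vec.span A2 \<subseteq> vec.span B2"
    using vec.maximal_independent_subset_extend[of "{a}" "vec.span A2"] a1(2) ia by auto
  have sp1: "vec.span B1 = vec.span A1"
    using B1(2,4) vec.span_superset[of A1] by (simp add: vec.span_eq)
  have sp2: "vec.span B2 = vec.span A2"
    using B2(2,4) vec.span_superset[of A2] by (simp add: vec.span_eq)
  have multa: "\<exists>k. b = k *s a" if "b \<in> vec.span A1" "b \<in> vec.span A2" for b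
  proof -
    have "b \<in> vec.span {a}" using that assms(1) by blast
    then show ?thesis by (auto simp: vec.span_singleton)
  qed
  have int: "B1 \<inter> B2 = {a}"
  proof
    show "{a} \<subseteq> B1 \<inter> B2" using B1(1) B2(1) by blast
  next
    show "B1 \<inter> B2 \<subseteq> {a}"
    proof
      fix b assume b: "b \<in> B1 \<inter> B2"
      then obtain k where k: "b = k *s a" using multa B1(2) B2(2) by blast
      show "b \<in> {a}"
      proof (rule ccontr)
        assume "b \<notin> {a}"
        then have "a \<in> B1 - {b}" using B1(1) by auto
        then have "b \<in> vec.span (B1 - {b})" unfolding k by (intro vec.span_scale vec.span_base)
        then have "vec.dependent B1" using b unfolding vec.dependent_def by blast
        then show False using B1(3) by simp
      qed
    qed
  qed
  have f1: "finite B1" "finite B2" using B1(3) B2(3) vec.finiteI_independent by auto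
  have c1: "card B1 = vec.dim B1" "card B2 = vec.dim B2"
    using vec.dim_eq_card_independent[OF B1(3)] vec.dim_eq_card_independent[OF B2(3)] by auto
  have "vec.span B1 \<inter> vec.span B2 = vec.span {a}" using sp1 sp2 assms(1) by simp
  then have d: "vec.dim (B1 \<union> B2) + 1 = vec.dim B1 + vec.dim B2" using dimsum assms(2) by blast
  have "card (B1 \<union> B2) + card (B1 \<inter> B2) = card B1 + card B2" using card_Un_Int[OF f1] by simp
  then have ce: "card (B1 \<union> B2) = vec.dim (B1 \<union> B2)" using int c1 d by simp
  have indep: "vec.independent (B1 \<union> B2)"
    using vec.card_le_dim_spanning[of "B1 \<union> B2" "B1 \<union> B2", OF order_refl vec.span_superset] ce f1 by auto
  define f where "f b = (if b \<in> vec.span A1 then dotQ c1 b else dotQ c2 b)" for b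
  obtain c where c: "\<forall>b\<in>B1 \<union> B2. dotQ c b = f b" using dotQ_extend[OF indep] by blast
  have e1: "\<forall>b\<in>B1. dotQ c b = dotQ c1 b" using c B1(2) by (auto simp: f_def)
  have e2: "\<forall>b\<in>B2. dotQ c b = dotQ c2 b"
  proof
    fix b assume b: "b \<in> B2"
    show "dotQ c b = dotQ c2 b"
    proof (cases "b \<in> vec.span A1")
      case True
      then obtain k where k: "b = k *s a" using multa b B2(2) by blast
      have "dotQ c1 b = dotQ c2 b" using assms(3) by (simp add: k dotQ_scale_right)
      then show ?thesis using c b True by (simp add: f_def)
    next
      case False then show ?thesis using c b by (simp add: f_def)
    qed
  qed
  have "\<forall>x\<in>vec.span A1. dotQ c x = dotQ c1 x" using dotQ_span[OF e1] sp1 by blast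
  moreover have "\<forall>x\<in>vec.span A2. dotQ c x = dotQ c2 x" using dotQ_span[OF e2] sp2 by blast
  ultimately show ?thesis by blast
qed



lemma cc_span: "cc (vec.span A)"
  unfolding cc_def by (auto intro: vec.span_zero vec.span_add vec.span_scale)

lemma sub_sumset1: "cc B \<Longrightarrow> A \<subseteq> {y1 + y2 | y1 y2. y1 \<in> A \<and> y2 \<in> B}"
proof
  fix x assume "cc B" "x \<in> A"
  then show "x \<in> {y1 + y2 | y1 y2. y1 \<in> A \<and> y2 \<in> B}"
    using cc_zero[of B] by (intro CollectI exI[of _ x] exI[of _ 0]) auto
qed

lemma sumset_sc:
  fixes s1 s2 :: "(rat^'n) set"
  assumes "cc s1" "cc s2" "strongly_convex s1" "strongly_convex s2"
    "vec.span s1 \<inter> vec.span s2 = vec.span {a}" "a \<in> s1" "a \<in> s2"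
  shows "strongly_convex {y1 + y2 | y1 y2. y1 \<in> s1 \<and> y2 \<in> s2}"
proof -
  let ?S = "{y1 + y2 | y1 y2. y1 \<in> s1 \<and> y2 \<in> s2}"
  have z: "(0::rat^'n) \<in> ?S" using cc_zero[OF assms(1)] cc_zero[OF assms(2)]
    by (intro CollectI exI[of _ 0] exI[of _ 0]) auto
  have key: "x = 0" if x: "x \<in> ?S" "x \<in> uminus ` ?S" for x
  proof -
    obtain y1 y2 where y: "x = y1 + y2" "y1 \<in> s1" "y2 \<in> s2" using x(1) by blast
    obtain z where zS: "z \<in> ?S" "x = - z" using x(2) by blast
    obtain z1 z2 where zz: "z = z1 + z2" "z1 \<in> s1" "z2 \<in> s2" using zS(1) by blast
    define w where "w = y1 + z1"
    have wS: "w \<in> s1" unfolding w_def using cc_add[OF assms(1) y(2) zz(2)] .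
    have v2: "y2 + z2 \<in> s2" using cc_add[OF assms(2) y(3) zz(3)] .
    have "w + (y2 + z2) = (y1 + y2) + (z1 + z2)" by (simp add: w_def algebra_simps)
    also have "\<dots> = x + z" using y(1) zz(1) by simp
    also have "\<dots> = 0" using zS(2) by simp
    finally have sum0: "w + (y2 + z2) = 0" .
    then have wm: "w = - (y2 + z2)" by (rule iffD2[OF eq_neg_iff_add_eq_0])
    have "w \<in> vec.span s1" using wS by (rule vec.span_base)
    moreover have "w \<in> vec.span s2" unfolding wm by (intro vec.span_neg vec.span_base v2)
    ultimately have "w \<in> vec.span {a}" using assms(5) by blast
    then obtain k where k: "w = k *s a" by (auto simp: vec.span_singleton)
    have w0: "w = 0"
    proof (cases "k \<ge> 0")
      case True
      have ka: "k *s a \<in> s2" using cc_scale[OF assms(2) assms(7) True] .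
      have "k *s a + (y2 + z2) = 0" using sum0 k by simp
      then have "k *s a = 0" using sc_pair[OF assms(4) ka v2] by blast
      then show ?thesis using k by simp
    next
      case False
      then have kk: "- k \<ge> 0" by simp
      have ma: "(- k) *s a \<in> s1" using cc_scale[OF assms(1) assms(6) kk] .
      have "w + (- k) *s a = 0" using k by (simp add: vec.scale_left_distrib[symmetric])
      then show ?thesis using sc_pair[OF assms(3) wS ma] by blast
    qed
    have "y1 + z1 = 0" using w0 w_def by simp
    then have "y1 = 0" using sc_pair[OF assms(3) y(2) zz(2)] by blast
    moreover have "y2 + z2 = 0" using sum0 w0 by simp
    then have "y2 = 0" using sc_pair[OF assms(4) y(3) zz(3)] by blast
    ultimately show ?thesis using y(1) by simp
  qed
  have z': "0 \<in> uminus ` ?S" by (rule image_eqI[where x=0]) (use z in simp_all)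
  show ?thesis unfolding strongly_convex_def
  proof (intro equalityI subsetI)
    fix x assume "x \<in> ?S \<inter> uminus ` ?S" then show "x \<in> {0}" using key by blast
  next
    fix x :: "rat^'n" assume "x \<in> {0}" then show "x \<in> ?S \<inter> uminus ` ?S" using z z' by simp
  qed
qed



definition sumset :: "(rat^'n) set \<Rightarrow> (rat^'n) set \<Rightarrow> (rat^'n) set" where
  "sumset s1 s2 = {y1 + y2 | y1 y2. y1 \<in> s1 \<and> y2 \<in> s2}"

definition dsetup :: "(rat^'n) set \<Rightarrow> (rat^'n) set \<Rightarrow> rat^'n \<Rightarrow> bool" where
  "dsetup s1 s2 a \<longleftrightarrow> cc s1 \<and> cc s2 \<and> strongly_convex s1 \<and> strongly_convex s2 \<and>
     a \<in> s1 \<and> a \<in> s2 \<and> a \<noteq> 0 \<and> vec.span s1 \<inter> vec.span s2 = vec.span {a}"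

lemma setup_sym: "dsetup s1 s2 a \<Longrightarrow> dsetup s2 s1 a"
  unfolding dsetup_def by blast

lemma sumset_sym: "sumset s1 s2 = sumset s2 s1"
  unfolding sumset_def by (metis (no_types, lifting) add.commute)

lemma sumset_props:
  assumes "dsetup s1 s2 a"
  shows "cc (sumset s1 s2)" "strongly_convex (sumset s1 s2)" "s1 \<subseteq> sumset s1 s2"
proof -
  have A: "cc s1" "cc s2" "strongly_convex s1" "strongly_convex s2" "a \<in> s1" "a \<in> s2"
      "vec.span s1 \<inter> vec.span s2 = vec.span {a}"
    using assms unfolding dsetup_def by blast+
  show "cc (sumset s1 s2)" unfolding sumset_def using posQ_Un[OF A(1,2)] cc_posQ by metis
  show "strongly_convex (sumset s1 s2)" unfolding sumset_def by (rule sumset_sc[OF A(1-4,7,5,6)])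
  show "s1 \<subseteq> sumset s1 s2" unfolding sumset_def by (rule sub_sumset1[OF A(2)])
qed

lemma glue_setup:
  assumes "dsetup s1 s2 a" "dotQ c1 a = dotQ c2 a"
  obtains c where "\<And>y1 y2. y1 \<in> s1 \<Longrightarrow> y2 \<in> s2 \<Longrightarrow> dotQ c (y1 + y2) = dotQ c1 y1 + dotQ c2 y2"
    "\<And>y1. y1 \<in> s1 \<Longrightarrow> dotQ c y1 = dotQ c1 y1"
proof -
  have A: "vec.span s1 \<inter> vec.span s2 = vec.span {a}" "a \<noteq> 0" using assms(1) unfolding dsetup_def by blast+
  obtain c where c: "\<forall>x\<in>vec.span s1. dotQ c x = dotQ c1 x" "\<forall>x\<in>vec.span s2. dotQ c x = dotQ c2 x"
    using glue[OF A assms(2)] by blast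
  show ?thesis
  proof (rule that)
    fix y1 y2 assume "y1 \<in> s1" "y2 \<in> s2"
    then show "dotQ c (y1 + y2) = dotQ c1 y1 + dotQ c2 y2"
    proof -
      have "dotQ c y1 = dotQ c1 y1" using c(1) vec.span_base \<open>y1 \<in> s1\<close> by blast
      moreover have "dotQ c y2 = dotQ c2 y2" using c(2) vec.span_base \<open>y2 \<in> s2\<close> by blast
      ultimately show ?thesis by (simp add: dotQ_add_right)
    qed
  next
    fix y1 assume "y1 \<in> s1" then show "dotQ c y1 = dotQ c1 y1" using c vec.span_base by blast
  qed
qed

lemma lift:
  assumes "dsetup s1 s2 a" "\<forall>x\<in>s2. x \<noteq> 0 \<longrightarrow> dotQ g x > 0" "\<rho> \<in> extreme_rays s1" "\<rho> \<noteq> rayQ a"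
  shows "\<rho> \<in> extreme_rays (sumset s1 s2)"
proof -
  have A: "cc s1" "cc s2" "strongly_convex s1" "strongly_convex s2" "a \<in> s1" "a \<in> s2" "a \<noteq> 0"
    using assms(1) unfolding dsetup_def by blast+
  obtain c1 where c1: "\<forall>y\<in>s1. dotQ c1 y \<ge> 0" "\<rho> = s1 \<inter> {y. dotQ c1 y = 0}"
    using ext_ray_face[OF assms(3)] by blast
  obtain r where r: "r \<in> \<rho>" "r \<noteq> 0" using ext_ray_nonzero[OF assms(3)] by blast
  have \<rho>r: "\<rho> = rayQ r" using ext_ray_D[OF A(1,3) assms(3) r] .
  have ca: "dotQ c1 a > 0"
  proof (rule ccontr)
    assume "\<not> dotQ c1 a > 0"
    then have "dotQ c1 a = 0" using c1(1) A(5) by force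
    then have "a \<in> \<rho>" using c1(2) A(5) by blast
    then have "\<rho> = rayQ a" using ext_ray_D[OF A(1,3) assms(3) _ A(7)] by blast
    then show False using assms(4) by simp
  qed
  have ga: "dotQ g a > 0" using assms(2) A(6,7) by blast
  define c2 where "c2 = (dotQ c1 a / dotQ g a) *s g"
  have c2a: "dotQ c1 a = dotQ c2 a" using ga by (simp add: c2_def dotQ_scale_left)
  have c2pos: "dotQ c2 x > 0" if "x \<in> s2" "x \<noteq> 0" for x
    using assms(2) that ca ga by (simp add: c2_def dotQ_scale_left)
  have c2nn: "dotQ c2 x \<ge> 0" if "x \<in> s2" for x
    using c2pos[OF that] by (cases "x = 0") auto
  obtain c where c: "\<And>y1 y2. y1 \<in> s1 \<Longrightarrow> y2 \<in> s2 \<Longrightarrow> dotQ c (y1 + y2) = dotQ c1 y1 + dotQ c2 y2"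
      "\<And>y1. y1 \<in> s1 \<Longrightarrow> dotQ c y1 = dotQ c1 y1"
    using glue_setup[OF assms(1) c2a] by blast
  have nn: "\<forall>y\<in>sumset s1 s2. dotQ c y \<ge> 0"
  proof
    fix y assume "y \<in> sumset s1 s2"
    then obtain y1 y2 where y: "y = y1 + y2" "y1 \<in> s1" "y2 \<in> s2" unfolding sumset_def by blast
    show "dotQ c y \<ge> 0" using c(1)[OF y(2,3)] c1(1) y c2nn[OF y(3)] by simp
  qed
  have eq: "sumset s1 s2 \<inter> {y. dotQ c y = 0} = rayQ r"
  proof
    show "sumset s1 s2 \<inter> {y. dotQ c y = 0} \<subseteq> rayQ r"
    proof
      fix y assume "y \<in> sumset s1 s2 \<inter> {y. dotQ c y = 0}"
      then obtain y1 y2 where y: "y = y1 + y2" "y1 \<in> s1" "y2 \<in> s2" "dotQ c y = 0"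
        unfolding sumset_def by blast
      have h: "dotQ c1 y1 + dotQ c2 y2 = 0" using c(1)[OF y(2,3)] y by simp
      have h1: "dotQ c1 y1 \<ge> 0" using c1(1) y(2) by blast
      have h2: "dotQ c2 y2 \<ge> 0" using c2nn y(3) by blast
      have "dotQ c2 y2 = 0" using h h1 h2 by linarith
      then have "y2 = 0" using c2pos[OF y(3)] by force
      moreover have "dotQ c1 y1 = 0" using h h1 h2 by linarith
      then have "y1 \<in> \<rho>" using c1(2) y(2) by blast
      ultimately show "y \<in> rayQ r" using y(1) \<rho>r by simp
    qed
  next
    show "rayQ r \<subseteq> sumset s1 s2 \<inter> {y. dotQ c y = 0}"
    proof
      fix y assume "y \<in> rayQ r"
      then have y: "y \<in> \<rho>" using \<rho>r by simp
      then have "y \<in> s1" "dotQ c1 y = 0" using c1(2) by blast+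
      then show "y \<in> sumset s1 s2 \<inter> {y. dotQ c y = 0}" using sumset_props(3)[OF assms(1)] c(2) by auto
    qed
  qed
  show ?thesis using ext_ray_I[OF r(2) nn eq] \<rho>r by simp
qed

lemma down:
  assumes "dsetup s1 s2 a" "\<rho> \<in> extreme_rays (sumset s1 s2)" "x \<in> \<rho>" "x \<noteq> 0" "x \<in> s1"
  shows "\<rho> \<in> extreme_rays s1"
proof -
  note P = sumset_props[OF assms(1)]
  have A: "cc s1" using assms(1) unfolding dsetup_def by blast
  obtain c where c: "\<forall>y\<in>sumset s1 s2. dotQ c y \<ge> 0" "\<rho> = sumset s1 s2 \<inter> {y. dotQ c y = 0}"
    using ext_ray_face[OF assms(2)] by blast
  have \<rho>x: "\<rho> = rayQ x" using ext_ray_D[OF P(1,2) assms(2,3,4)] .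
  have nn: "\<forall>y\<in>s1. dotQ c y \<ge> 0" using c(1) P(3) by blast
  have eq: "s1 \<inter> {y. dotQ c y = 0} = rayQ x"
  proof
    show "s1 \<inter> {y. dotQ c y = 0} \<subseteq> rayQ x" using P(3) c(2) \<rho>x by blast
    show "rayQ x \<subseteq> s1 \<inter> {y. dotQ c y = 0}" using rayQ_subset[OF A assms(5)] c(2) \<rho>x by blast
  qed
  show ?thesis using ext_ray_I[OF assms(4) nn eq] \<rho>x by simp
qed

lemma split_ray:
  assumes "dsetup s1 s2 a" "\<rho> \<in> extreme_rays (sumset s1 s2)"
  shows "\<rho> \<in> extreme_rays s1 \<or> \<rho> \<in> extreme_rays s2"
proof -
  note P = sumset_props[OF assms(1)]
  obtain c where c: "\<forall>y\<in>sumset s1 s2. dotQ c y \<ge> 0" "\<rho> = sumset s1 s2 \<inter> {y. dotQ c y = 0}"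
    using ext_ray_face[OF assms(2)] by blast
  obtain x where x: "x \<in> \<rho>" "x \<noteq> 0" using ext_ray_nonzero[OF assms(2)] by blast
  then obtain y1 y2 where y: "x = y1 + y2" "y1 \<in> s1" "y2 \<in> s2" using c(2) unfolding sumset_def by blast
  have s2S: "s2 \<subseteq> sumset s1 s2" using sumset_props(3)[OF setup_sym[OF assms(1)]] sumset_sym by metis
  have h1: "dotQ c y1 \<ge> 0" using c(1) P(3) y(2) by blast
  have h2: "dotQ c y2 \<ge> 0" using c(1) s2S y(3) by blast
  have "dotQ c x = 0" using x c(2) by blast
  then have h: "dotQ c y1 + dotQ c y2 = 0" using y(1) by (simp add: dotQ_add_right)
  have r1: "y1 \<in> \<rho>" using c(2) P(3) y(2) h h1 h2 by auto
  have r2: "y2 \<in> \<rho>" using c(2) s2S y(3) h h1 h2 by auto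
  show ?thesis
  proof (cases "y1 = 0")
    case False
    then show ?thesis using down[OF assms(1,2) r1 False y(2)] by blast
  next
    case True
    then have "y2 \<noteq> 0" using x(2) y(1) by simp
    moreover have "\<rho> \<in> extreme_rays (sumset s2 s1)" using assms(2) sumset_sym by metis
    ultimately show ?thesis using down[OF setup_sym[OF assms(1)] _ r2 _ y(3)] by blast
  qed
qed

lemma both_ray:
  assumes "dsetup s1 s2 a" "rayQ a \<in> extreme_rays s1" "rayQ a \<in> extreme_rays s2"
  shows "rayQ a \<in> extreme_rays (sumset s1 s2)"
proof -
  have A: "cc s1" "a \<in> s1" "a \<noteq> 0" using assms(1) unfolding dsetup_def by blast+
  obtain c1 where c1: "\<forall>y\<in>s1. dotQ c1 y \<ge> 0" "rayQ a = s1 \<inter> {y. dotQ c1 y = 0}"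
    using ext_ray_face[OF assms(2)] by blast
  obtain c2 where c2: "\<forall>y\<in>s2. dotQ c2 y \<ge> 0" "rayQ a = s2 \<inter> {y. dotQ c2 y = 0}"
    using ext_ray_face[OF assms(3)] by blast
  have "dotQ c1 a = 0" "dotQ c2 a = 0" using c1(2) c2(2) rayQ_self[of a] by blast+
  then have c12: "dotQ c1 a = dotQ c2 a" by simp
  obtain c where c: "\<And>y1 y2. y1 \<in> s1 \<Longrightarrow> y2 \<in> s2 \<Longrightarrow> dotQ c (y1 + y2) = dotQ c1 y1 + dotQ c2 y2"
      "\<And>y1. y1 \<in> s1 \<Longrightarrow> dotQ c y1 = dotQ c1 y1"
    using glue_setup[OF assms(1) c12] by blast
  have nn: "\<forall>y\<in>sumset s1 s2. dotQ c y \<ge> 0"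
  proof
    fix y assume "y \<in> sumset s1 s2"
    then obtain y1 y2 where y: "y = y1 + y2" "y1 \<in> s1" "y2 \<in> s2" unfolding sumset_def by blast
    show "dotQ c y \<ge> 0" using c(1)[OF y(2,3)] c1(1) c2(1) y by simp
  qed
  have eq: "sumset s1 s2 \<inter> {y. dotQ c y = 0} = rayQ a"
  proof
    show "sumset s1 s2 \<inter> {y. dotQ c y = 0} \<subseteq> rayQ a"
    proof
      fix y assume "y \<in> sumset s1 s2 \<inter> {y. dotQ c y = 0}"
      then obtain y1 y2 where y: "y = y1 + y2" "y1 \<in> s1" "y2 \<in> s2" "dotQ c y = 0"
        unfolding sumset_def by blast
      have h: "dotQ c1 y1 + dotQ c2 y2 = 0" using c(1)[OF y(2,3)] y by simp
      have h1: "dotQ c1 y1 \<ge> 0" using c1(1) y(2) by blast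
      have h2: "dotQ c2 y2 \<ge> 0" using c2(1) y(3) by blast
      have "dotQ c1 y1 = 0" "dotQ c2 y2 = 0" using h h1 h2 by linarith+
      then have "y1 \<in> rayQ a" "y2 \<in> rayQ a" using c1(2) c2(2) y(2,3) by blast+
      then obtain t1 t2 where "t1 \<ge> 0" "y1 = t1 *s a" "t2 \<ge> 0" "y2 = t2 *s a" unfolding rayQ_def by blast
      then have "y = (t1 + t2) *s a" "t1 + t2 \<ge> 0" using y(1) by (simp_all add: vec.scale_left_distrib)
      then show "y \<in> rayQ a" unfolding rayQ_def by blast
    qed
  next
    show "rayQ a \<subseteq> sumset s1 s2 \<inter> {y. dotQ c y = 0}"
    proof
      fix y assume y: "y \<in> rayQ a"
      then have "y \<in> s1" "dotQ c1 y = 0" using c1(2) by blast+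
      then show "y \<in> sumset s1 s2 \<inter> {y. dotQ c y = 0}" using sumset_props(3)[OF assms(1)] c(2) by auto
    qed
  qed
  show ?thesis using ext_ray_I[OF A(3) nn eq] .
qed



lemma ext_ray_subset: "F \<in> extreme_rays X \<Longrightarrow> F \<subseteq> X"
  by (erule ext_ray_face) blast

theorem theorem2p4:
  fixes \<sigma>1 \<sigma>2 :: "(rat ^ 'n) set" and a :: "rat ^ 'n"
  assumes "rat_polyhedral_cone \<sigma>1" and "strongly_convex \<sigma>1"
    and "rat_polyhedral_cone \<sigma>2" and "strongly_convex \<sigma>2"
    and "a \<in> \<sigma>1 \<inter> \<sigma>2" and "a \<noteq> 0"
    and "vec.span \<sigma>1 \<inter> vec.span \<sigma>2 = vec.span {a}"
  shows "vec.dim (posQ (\<sigma>1 \<union> \<sigma>2)) = vec.dim \<sigma>1 + vec.dim \<sigma>2 - 1 \<and>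
         (\<not> (on_extreme_ray a \<sigma>1 \<or> on_extreme_ray a \<sigma>2) \<longrightarrow>
           card (extreme_rays (posQ (\<sigma>1 \<union> \<sigma>2))) =
             card (extreme_rays \<sigma>1) + card (extreme_rays \<sigma>2)) \<and>
         ((on_extreme_ray a \<sigma>1 \<or> on_extreme_ray a \<sigma>2) \<longrightarrow>
           card (extreme_rays (posQ (\<sigma>1 \<union> \<sigma>2))) =
             card (extreme_rays \<sigma>1) + card (extreme_rays \<sigma>2) - 1)"
proof -
  obtain F1 where F1: "finite F1" "\<sigma>1 = posQ F1" using assms(1) unfolding rat_polyhedral_cone_def by blast
  obtain F2 where F2: "finite F2" "\<sigma>2 = posQ F2" using assms(3) unfolding rat_polyhedral_cone_def by blast
  have cc1: "cc \<sigma>1" using F1(2) cc_posQ by simp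
  have cc2: "cc \<sigma>2" using F2(2) cc_posQ by simp
  have a12: "a \<in> \<sigma>1" "a \<in> \<sigma>2" using assms(5) by blast+
  have su: "dsetup \<sigma>1 \<sigma>2 a" unfolding dsetup_def using cc1 cc2 assms(2,4,6,7) a12 by blast
  have Seq: "posQ (\<sigma>1 \<union> \<sigma>2) = sumset \<sigma>1 \<sigma>2" unfolding sumset_def by (rule posQ_Un[OF cc1 cc2])
  have sub1: "posQ (\<sigma>1 \<union> \<sigma>2) \<subseteq> vec.span (\<sigma>1 \<union> \<sigma>2)"
    by (rule posQ_least[OF cc_span vec.span_superset])
  have sub2: "\<sigma>1 \<union> \<sigma>2 \<subseteq> vec.span (posQ (\<sigma>1 \<union> \<sigma>2))"
    using subset_posQ[of "\<sigma>1 \<union> \<sigma>2"] vec.span_superset[of "posQ (\<sigma>1 \<union> \<sigma>2)"] by blast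
  have sp: "vec.span (posQ (\<sigma>1 \<union> \<sigma>2)) = vec.span (\<sigma>1 \<union> \<sigma>2)"
    using sub1 sub2 by (simp add: vec.span_eq)
  have "vec.dim (posQ (\<sigma>1 \<union> \<sigma>2)) = vec.dim (\<sigma>1 \<union> \<sigma>2)" by (metis vec.dim_span sp)
  moreover have "vec.dim (\<sigma>1 \<union> \<sigma>2) + 1 = vec.dim \<sigma>1 + vec.dim \<sigma>2" by (rule dimsum[OF assms(7,6)])
  ultimately have DIM: "vec.dim (posQ (\<sigma>1 \<union> \<sigma>2)) = vec.dim \<sigma>1 + vec.dim \<sigma>2 - 1" by simp
  define E1 where "E1 = extreme_rays \<sigma>1"
  define E2 where "E2 = extreme_rays \<sigma>2"
  define E where "E = extreme_rays (posQ (\<sigma>1 \<union> \<sigma>2))"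
  define Ra where "Ra = rayQ a"
  have ES: "E = extreme_rays (sumset \<sigma>1 \<sigma>2)" unfolding E_def Seq ..
  have fin1: "finite E1" unfolding E1_def using ext_rays_finite[OF F1(1)] F1(2) assms(2) by simp
  have fin2: "finite E2" unfolding E2_def using ext_rays_finite[OF F2(1)] F2(2) assms(4) by simp
  obtain g1 where g1: "\<forall>x\<in>\<sigma>1. x \<noteq> 0 \<longrightarrow> dotQ g1 x > 0"
    using pos_functional[OF F1(1)] F1(2) assms(2) by auto
  obtain g2 where g2: "\<forall>x\<in>\<sigma>2. x \<noteq> 0 \<longrightarrow> dotQ g2 x > 0"
    using pos_functional[OF F2(1)] F2(2) assms(4) by auto
  have on1: "on_extreme_ray a \<sigma>1 \<longleftrightarrow> Ra \<in> E1"
  proof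
    assume "on_extreme_ray a \<sigma>1"
    then obtain \<rho> where "\<rho> \<in> E1" "a \<in> \<rho>" unfolding on_extreme_ray_def E1_def by blast
    then show "Ra \<in> E1" using ext_ray_D[OF cc1 assms(2) _ _ assms(6)] unfolding E1_def Ra_def by metis
  next
    assume "Ra \<in> E1" then show "on_extreme_ray a \<sigma>1"
      unfolding on_extreme_ray_def E1_def Ra_def using rayQ_self by blast
  qed
  have on2: "on_extreme_ray a \<sigma>2 \<longleftrightarrow> Ra \<in> E2"
  proof
    assume "on_extreme_ray a \<sigma>2"
    then obtain \<rho> where "\<rho> \<in> E2" "a \<in> \<rho>" unfolding on_extreme_ray_def E2_def by blast
    then show "Ra \<in> E2" using ext_ray_D[OF cc2 assms(4) _ _ assms(6)] unfolding E2_def Ra_def by metis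
  next
    assume "Ra \<in> E2" then show "on_extreme_ray a \<sigma>2"
      unfolding on_extreme_ray_def E2_def Ra_def using rayQ_self by blast
  qed
  have I: "E1 \<inter> E2 \<subseteq> {Ra}"
  proof
    fix \<rho> assume \<rho>: "\<rho> \<in> E1 \<inter> E2"
    then have \<rho>1: "\<rho> \<in> extreme_rays \<sigma>1" and \<rho>2: "\<rho> \<in> extreme_rays \<sigma>2" unfolding E1_def E2_def by auto
    obtain x where x: "x \<in> \<rho>" "x \<noteq> 0" using ext_ray_nonzero[OF \<rho>1] by blast
    have x1: "x \<in> \<sigma>1" using ext_ray_subset[OF \<rho>1] x(1) by blast
    have x2: "x \<in> \<sigma>2" using ext_ray_subset[OF \<rho>2] x(1) by blast
    have "x \<in> vec.span {a}" using assms(7) x1 x2 vec.span_base by blast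
    then obtain k where k: "x = k *s a" by (auto simp: vec.span_singleton)
    have \<rho>x: "\<rho> = rayQ x" using ext_ray_D[OF cc1 assms(2) \<rho>1 x] .
    show "\<rho> \<in> {Ra}"
    proof (cases "k > 0")
      case True
      then have "a = (1 / k) *s x" "1 / k \<ge> 0" by (simp_all add: k vec.scale_scale)
      then have "a \<in> \<rho>" unfolding \<rho>x rayQ_def by blast
      then have "\<rho> = rayQ a" using ext_ray_D[OF cc1 assms(2) \<rho>1 _ assms(6)] by blast
      then show ?thesis unfolding Ra_def by simp
    next
      case False
      then have kk: "- k \<ge> 0" by simp
      have "(- k) *s a \<in> \<sigma>2" using cc_scale[OF cc2 a12(2) kk] .
      moreover have "(- k) *s a = - x" by (simp add: k)
      ultimately have "x = 0" using sc_zero[OF assms(4) x2] by simp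
      then show ?thesis using x(2) by simp
    qed
  qed
  have EA: "\<rho> \<in> E \<longleftrightarrow> \<rho> \<in> E1 \<union> E2" if ne: "\<rho> \<noteq> Ra" for \<rho>
  proof
    assume "\<rho> \<in> E" then show "\<rho> \<in> E1 \<union> E2" using split_ray[OF su] unfolding ES E1_def E2_def by blast
  next
    assume "\<rho> \<in> E1 \<union> E2"
    then show "\<rho> \<in> E"
    proof
      assume "\<rho> \<in> E1"
      then show ?thesis using lift[OF su g2 _ ne[unfolded Ra_def]] unfolding ES E1_def by blast
    next
      assume "\<rho> \<in> E2"
      then have "\<rho> \<in> extreme_rays (sumset \<sigma>2 \<sigma>1)"
        using lift[OF setup_sym[OF su] g1 _ ne[unfolded Ra_def]] unfolding E2_def by blast
      then show ?thesis unfolding ES using sumset_sym by metis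
    qed
  qed
  have EB: "Ra \<in> E \<longleftrightarrow> Ra \<in> E1 \<and> Ra \<in> E2"
  proof
    assume RE: "Ra \<in> E"
    have aR: "a \<in> Ra" unfolding Ra_def by (rule rayQ_self)
    have "Ra \<in> E1" using down[OF su RE[unfolded ES] aR assms(6) a12(1)] unfolding E1_def .
    moreover have "Ra \<in> extreme_rays (sumset \<sigma>2 \<sigma>1)" using RE unfolding ES using sumset_sym by metis
    then have "Ra \<in> E2" using down[OF setup_sym[OF su] _ aR assms(6) a12(2)] unfolding E2_def by blast
    ultimately show "Ra \<in> E1 \<and> Ra \<in> E2" by blast
  next
    assume "Ra \<in> E1 \<and> Ra \<in> E2"
    then show "Ra \<in> E" using both_ray[OF su] unfolding ES E1_def E2_def Ra_def by blast
  qed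
  have RAYS1: "card E = card E1 + card E2" if int: "\<not> (Ra \<in> E1 \<or> Ra \<in> E2)"
  proof -
    have "E = E1 \<union> E2"
    proof (intro set_eqI)
      fix \<rho> show "\<rho> \<in> E \<longleftrightarrow> \<rho> \<in> E1 \<union> E2"
        using EA EB int by (cases "\<rho> = Ra") auto
    qed
    moreover have "E1 \<inter> E2 = {}" using I int by blast
    ultimately show ?thesis using card_Un_disjoint[OF fin1 fin2] by simp
  qed
  have RAYS2: "card E = card E1 + card E2 - 1" if ext: "Ra \<in> E1 \<or> Ra \<in> E2"
  proof (cases "Ra \<in> E1 \<and> Ra \<in> E2")
    case True
    have "E = E1 \<union> E2"
    proof (intro set_eqI)
      fix \<rho> show "\<rho> \<in> E \<longleftrightarrow> \<rho> \<in> E1 \<union> E2"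
        using EA EB True by (cases "\<rho> = Ra") auto
    qed
    moreover have "E1 \<inter> E2 = {Ra}" using I True by blast
    ultimately show ?thesis using card_Un_Int[OF fin1 fin2] by simp
  next
    case False
    have Eeq: "E = (E1 \<union> E2) - {Ra}"
    proof (intro set_eqI)
      fix \<rho> show "\<rho> \<in> E \<longleftrightarrow> \<rho> \<in> (E1 \<union> E2) - {Ra}"
        using EA EB False by (cases "\<rho> = Ra") auto
    qed
    have "E1 \<inter> E2 = {}" using I False by blast
    then have "card (E1 \<union> E2) = card E1 + card E2" using card_Un_disjoint[OF fin1 fin2] by simp
    moreover have "Ra \<in> E1 \<union> E2" using ext by blast
    ultimately show ?thesis unfolding Eeq using card_Diff_singleton[of Ra "E1 \<union> E2"] by simp
  qed
  show ?thesis
    using DIM RAYS1 RAYS2 on1 on2 unfolding E_def E1_def E2_def by blast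
qed

end
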